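(* Let $G$ be a connected simple graph and let $G'$ be obtained from $G$ by a symmetric $\mathcal K_{xy}$-operation in which the sets $X$ and $Y$ are both nonempty. Then $\alpha(G)\le\alpha(G')$ and $A(\lambda,G)>A(\lambda,G')$ for every real $\lambda\ge\alpha(G')$.
   Context: For a graph $G$, $A(\lambda,G)=\det(\lambda I-A(G))$ is the characteristic polynomial of its adjacency matrix $A(G)$ and $\alpha(G)$ is the largest eigenvalue of $A(G)$. $\mathcal K_{xy}$-operation: let $G$ be a simple graph, $x\ne y$ vertices, $\mathcal K$ an induced subgraph of $G$ containing $x$ and $y$, and $N(v)$ the neighbourhood of $v$. Put $X=N(x)\setminus(V(\mathcal K)\cup N(y))$, $Y=N(y)\setminus(V(\mathcal K)\cup N(x))$, $[x,X]=\{xv:v\in X\}$, $[y,X]=\{yv:v\in X\}$, $[y,Y]=\{yv:v\in Y\}$. The graph $\mathcal K_{xy}(G)=(G-[x,X])\cup[y,X]$ (on the same vertex set) is obtained from $G$ by the $\mathcal K_{xy}$-operation. The operation is called symmetric if the graph $G-([x,X]\cup[y,Y])$ has an automorphism $\alpha$ with $\alpha(x)=y$, $\alpha(y)=x$, $\alpha(V(\mathcal K))=V(\mathcal K)$, and $\alpha(v)=v$ for every $v\in X\cup Y$. *)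

theory Defs
  imports "HOL-Analysis.Analysis"
begin

definition simple_graph :: "('n \<Rightarrow> 'n \<Rightarrow> bool) \<Rightarrow> bool" where
  "simple_graph E \<longleftrightarrow> (\<forall>u v. E u v \<longrightarrow> E v u) \<and> (\<forall>v. \<not> E v v)"

definition connected_graph :: "('n \<Rightarrow> 'n \<Rightarrow> bool) \<Rightarrow> bool" where
  "connected_graph E \<longleftrightarrow> (\<forall>u v. E\<^sup>*\<^sup>* u v)"

definition adj_matrix :: "('n::finite \<Rightarrow> 'n \<Rightarrow> bool) \<Rightarrow> real^'n^'n" where
  "adj_matrix E = (\<chi> i j. if E i j then 1 else 0)"

text \<open>Characteristic polynomial A(lambda,G) = det(lambda I - A(G)), evaluated at real lambda.\<close>
definition char_poly :: "('n::finite \<Rightarrow> 'n \<Rightarrow> bool) \<Rightarrow> real \<Rightarrow> real" where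
  "char_poly E t = det (mat t - adj_matrix E)"

definition index :: "('n::finite \<Rightarrow> 'n \<Rightarrow> bool) \<Rightarrow> real" where
  "index E = Max {t. char_poly E t = 0}"

definition nbh :: "('n \<Rightarrow> 'n \<Rightarrow> bool) \<Rightarrow> 'n \<Rightarrow> 'n set" where
  "nbh E v = {u. E v u}"

definition Xset :: "('n \<Rightarrow> 'n \<Rightarrow> bool) \<Rightarrow> 'n set \<Rightarrow> 'n \<Rightarrow> 'n \<Rightarrow> 'n set" where
  "Xset E K x y = nbh E x - (K \<union> nbh E y)"

definition Kop :: "('n \<Rightarrow> 'n \<Rightarrow> bool) \<Rightarrow> 'n set \<Rightarrow> 'n \<Rightarrow> 'n \<Rightarrow> ('n \<Rightarrow> 'n \<Rightarrow> bool)" where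
  "Kop E K x y = (\<lambda>u v.
     (E u v \<and> \<not> ((u = x \<and> v \<in> Xset E K x y) \<or> (v = x \<and> u \<in> Xset E K x y)))
     \<or> (u = y \<and> v \<in> Xset E K x y) \<or> (v = y \<and> u \<in> Xset E K x y))"

text \<open>G - ([x,X] \<union> [y,Y]) where Y = Xset E K y x.\<close>
definition Kop_core :: "('n \<Rightarrow> 'n \<Rightarrow> bool) \<Rightarrow> 'n set \<Rightarrow> 'n \<Rightarrow> 'n \<Rightarrow> ('n \<Rightarrow> 'n \<Rightarrow> bool)" where
  "Kop_core E K x y = (\<lambda>u v. E u v
     \<and> \<not> ((u = x \<and> v \<in> Xset E K x y) \<or> (v = x \<and> u \<in> Xset E K x y))
     \<and> \<not> ((u = y \<and> v \<in> Xset E K y x) \<or> (v = y \<and> u \<in> Xset E K y x)))"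

definition graph_automorphism :: "('n \<Rightarrow> 'n \<Rightarrow> bool) \<Rightarrow> ('n \<Rightarrow> 'n) \<Rightarrow> bool" where
  "graph_automorphism E \<sigma> \<longleftrightarrow> bij \<sigma> \<and> (\<forall>u v. E u v \<longleftrightarrow> E (\<sigma> u) (\<sigma> v))"

definition symmetric_Kop :: "('n \<Rightarrow> 'n \<Rightarrow> bool) \<Rightarrow> 'n set \<Rightarrow> 'n \<Rightarrow> 'n \<Rightarrow> bool" where
  "symmetric_Kop E K x y \<longleftrightarrow> (\<exists>\<sigma>. graph_automorphism (Kop_core E K x y) \<sigma>
     \<and> \<sigma> x = y \<and> \<sigma> y = x \<and> \<sigma> ` K = K
     \<and> (\<forall>v \<in> Xset E K x y \<union> Xset E K y x. \<sigma> v = v))"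

end

theory Submission
  imports Defs
begin

lemma det_eq0: "det (M::real^'n::finite^'n) = 0 \<longleftrightarrow> (\<exists>v. v \<noteq> 0 \<and> M *v v = 0)"
  using invertible_det_nz[of M] matrix_left_invertible_ker[of M] invertible_left_inverse[of M]
  by auto

lemma matt_mult: "(mat t - A) *v v = t *\<^sub>R v - A *v (v::real^'n::finite)"
proof -
  have "mat t *v v = t *\<^sub>R v"
    apply (vector matrix_vector_mult_def mat_def)
    apply (simp add: if_distrib if_distribR cong del: if_weak_cong)
    done
  thus ?thesis by (simp add: matrix_vector_mult_diff_rdistrib)
qed

lemma sym_inner: assumes "transpose A = (A::real^'n::finite^'n)"
  shows "w \<bullet> (A *v v) = v \<bullet> (A *v w)"
proof -
  have "w \<bullet> (A *v v) = (w v* A) \<bullet> v" by (simp add: dot_lmul_matrix)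
  also have "w v* A = A *v w" using assms vector_transpose_matrix[of w A] by simp
  finally show ?thesis by (simp add: inner_commute)
qed

lemma aux_quad: "(m::real) + 2 * s * p + s^2 * q \<le> m * (1 + 2 * s * r + s^2 * u) \<Longrightarrow> 2 * s * (p - m * r) + s^2 * (q - m * u) \<le> 0"
  by (simp add: algebra_simps power2_eq_square)

lemma rayleigh_max:
  fixes A :: "real^'n::finite^'n"
  assumes sym: "transpose A = A"
  shows "\<exists>\<mu> v. v \<noteq> 0 \<and> A *v v = \<mu> *\<^sub>R v \<and> (\<forall>z. z \<bullet> (A *v z) \<le> \<mu> * (z \<bullet> z))"
proof -
  let ?f = "\<lambda>z::real^'n. z \<bullet> (A *v z)"
  have comp: "compact (sphere (0::real^'n) 1)" by simp
  have ne: "sphere (0::real^'n) 1 \<noteq> {}"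
    by simp
  have cont: "continuous_on (sphere 0 1) ?f"
    by (intro continuous_intros)
  obtain v where v: "v \<in> sphere 0 1" and vmax: "\<And>z. z \<in> sphere 0 1 \<Longrightarrow> ?f z \<le> ?f v"
    using continuous_attains_sup[OF comp ne cont] by blast
  define \<mu> where "\<mu> = ?f v"
  have vv: "v \<bullet> v = 1" using v by (simp add: dot_square_norm)
  have bound: "?f z \<le> \<mu> * (z \<bullet> z)" for z
  proof (cases "z = 0")
    case True then show ?thesis by simp
  next
    case False
    let ?u = "(1 / norm z) *\<^sub>R z"
    have "?u \<in> sphere 0 1" using False by simp
    hence h0: "?f ?u \<le> \<mu>" using vmax \<mu>_def by blast
    have h1: "?f ?u = ?f z / (norm z)^2"
      by (simp add: matrix_vector_mult_scaleR power2_eq_square)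
    have h2: "z \<bullet> z = (norm z)^2" by (simp add: dot_square_norm)
    have h3: "(norm z)^2 > 0" using False by simp
    have "?f z / (norm z)^2 \<le> \<mu>" using h0 h1 by simp
    hence "?f z \<le> \<mu> * (norm z)^2" using h3 by (simp add: divide_le_eq)
    thus ?thesis using h2 by simp
  qed
  have key: "w \<bullet> (A *v v) - \<mu> * (v \<bullet> w) = 0" for w
  proof -
    define c where "c = w \<bullet> (A *v v) - \<mu> * (v \<bullet> w)"
    define d where "d = ?f w - \<mu> * (w \<bullet> w)"
    have dle: "d \<le> 0" using bound[of w] d_def by simp
    have ineq: "2 * s * c + s^2 * d \<le> 0" for s
    proof -
      have B: "?f (v + s *\<^sub>R w) \<le> \<mu> * ((v + s *\<^sub>R w) \<bullet> (v + s *\<^sub>R w))" by (rule bound)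
      have E1: "?f (v + s *\<^sub>R w) = ?f v + 2 * s * (w \<bullet> (A *v v)) + s^2 * ?f w"
        using sym_inner[OF sym, of v w]
        by (simp add: matrix_vector_right_distrib matrix_vector_mult_scaleR inner_add_left
            inner_add_right power2_eq_square algebra_simps)
      have E2: "(v + s *\<^sub>R w) \<bullet> (v + s *\<^sub>R w) = 1 + 2 * s * (v \<bullet> w) + s^2 * (w \<bullet> w)"
        using vv by (simp add: inner_add_left inner_add_right power2_eq_square algebra_simps inner_commute)
      have "\<mu> + 2 * s * (w \<bullet> (A *v v)) + s^2 * ?f w \<le> \<mu> * (1 + 2 * s * (v \<bullet> w) + s^2 * (w \<bullet> w))"
        using B E1 E2 \<mu>_def by simp
      from aux_quad[OF this] show ?thesis unfolding c_def d_def .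
    qed
    define e where "e = 1 / (1 - d)"
    have epos: "e > 0" using dle e_def by simp
    have ed: "e * d > -1" using dle unfolding e_def by (simp add: field_simps)
    have "2 * (e*c) * c + (e*c)^2 * d \<le> 0" by (rule ineq)
    hence "c^2 * (e * (2 + e * d)) \<le> 0" by (simp add: power2_eq_square algebra_simps)
    moreover have "e * (2 + e * d) > 0" using epos ed by simp
    ultimately have "c = 0"
      by (metis mult_pos_pos not_le power2_less_eq_zero_iff zero_less_power2)
    thus ?thesis unfolding c_def by simp
  qed
  have "A *v v - \<mu> *\<^sub>R v = 0"
  proof -
    let ?w = "A *v v - \<mu> *\<^sub>R v"
    have "?w \<bullet> (A *v v) - \<mu> * (v \<bullet> ?w) = ?w \<bullet> ?w"
      by (simp add: inner_diff_left inner_diff_right inner_commute algebra_simps)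
    thus ?thesis using key[of ?w] by simp
  qed
  moreover have "v \<noteq> 0" using v by auto
  ultimately show ?thesis using bound by auto
qed

lemma det_cont: "continuous_on S (\<lambda>s::real. det (\<chi> i j. f s i j :: real^'n::finite^'n))"
  if "\<And>i j. continuous_on S (\<lambda>s. f s i j)"
  unfolding det_def using that by (auto intro!: continuous_intros)

lemma pd_nonsing:
  fixes M :: "real^'n::finite^'n"
  assumes "\<forall>z. z \<noteq> 0 \<longrightarrow> z \<bullet> (M *v z) > 0"
  shows "det M \<noteq> 0"
  using assms det_eq0[of M] by force

lemma pd_det_pos:
  fixes M :: "real^'n::finite^'n"
  assumes pd: "\<forall>z. z \<noteq> 0 \<longrightarrow> z \<bullet> (M *v z) > 0"
  shows "det M > 0"
proof (rule ccontr)
  assume "\<not> det M > 0"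
  hence neg: "det M \<le> 0" by simp
  define g where "g s = det (\<chi> i j. (if i = j then 1 - s else 0) + s * M$i$j :: real^'n^'n)" for s
  have cont: "continuous_on {0..1} g" unfolding g_def
    apply (rule det_cont)
    subgoal for i j by (cases "i = j") (auto intro!: continuous_intros)
    done
  have g1: "g 1 = det M" unfolding g_def by (rule arg_cong[where f=det]) (simp add: vec_eq_iff)
  have "(\<chi> i j. (if i = j then 1 - 0 else 0) + 0 * M$i$j :: real^'n^'n) = mat 1"
    by (simp add: vec_eq_iff mat_def)
  hence g0: "g 0 = 1" unfolding g_def by simp
  obtain s where s: "0 \<le> s" "s \<le> 1" "g s = 0"
    using IVT2'[of g 1 0 0] cont g0 g1 neg by auto
  have "det (\<chi> i j. (if i = j then 1 - s else 0) + s * M$i$j :: real^'n^'n) \<noteq> 0"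
  proof (rule pd_nonsing, intro allI impI)
    fix z :: "real^'n" assume z: "z \<noteq> 0"
    have eq: "(\<chi> i j. (if i = j then 1 - s else 0) + s * M$i$j :: real^'n^'n) *v z
        = (1 - s) *\<^sub>R z + s *\<^sub>R (M *v z)"
    proof -
      have "(\<chi> i j. (if i = j then 1 - s else 0) + s * M$i$j :: real^'n^'n) = mat (1 - s) + s *\<^sub>R M"
        by (simp add: vec_eq_iff mat_def)
      moreover have "mat (1 - s) *v z = (1 - s) *\<^sub>R z"
        apply (vector matrix_vector_mult_def mat_def)
        apply (simp add: if_distrib if_distribR cong del: if_weak_cong)
        done
      ultimately show ?thesis
        by (simp add: matrix_vector_mult_add_rdistrib scaleR_matrix_vector_assoc)
    qed
    have "z \<bullet> z > 0" using z by simp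
    moreover have "z \<bullet> (M *v z) > 0" using pd z by simp
    ultimately have "(1 - s) * (z \<bullet> z) + s * (z \<bullet> (M *v z)) > 0"
      using s by (smt (verit) mult_nonneg_nonneg mult_pos_pos)
    thus "z \<bullet> ((\<chi> i j. (if i = j then 1 - s else 0) + s * M$i$j :: real^'n^'n) *v z) > 0"
      unfolding eq by (simp add: inner_add_right)
  qed
  thus False using s g_def by simp
qed

lemma psd_det_nonneg:
  fixes M :: "real^'n::finite^'n"
  assumes psd: "\<forall>z. z \<bullet> (M *v z) \<ge> 0"
  shows "det M \<ge> 0"
proof (rule ccontr)
  assume "\<not> det M \<ge> 0"
  hence neg: "det M \<le> 0" "det M \<noteq> 0" by auto
  define g where "g s = det (\<chi> i j. (if i = j then s else 0) + M$i$j :: real^'n^'n)" for s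
  have cont: "continuous_on {0..1} g" unfolding g_def
    apply (rule det_cont)
    subgoal for i j by (cases "i = j") (auto intro!: continuous_intros)
    done
  have eq: "(\<chi> i j. (if i = j then s else 0) + M$i$j :: real^'n^'n) *v z = s *\<^sub>R z + M *v z" for s z
  proof -
    have "(\<chi> i j. (if i = j then s else 0) + M$i$j :: real^'n^'n) = mat s + M"
      by (simp add: vec_eq_iff mat_def)
    moreover have "mat s *v z = s *\<^sub>R z"
      apply (vector matrix_vector_mult_def mat_def)
      apply (simp add: if_distrib if_distribR cong del: if_weak_cong)
      done
    ultimately show ?thesis by (simp add: matrix_vector_mult_add_rdistrib)
  qed
  have pd: "\<forall>z. z \<noteq> 0 \<longrightarrow> z \<bullet> ((\<chi> i j. (if i = j then s else 0) + M$i$j :: real^'n^'n) *v z) > 0"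
    if "s > 0" for s
  proof (intro allI impI)
    fix z :: "real^'n" assume "z \<noteq> 0"
    hence "z \<bullet> z > 0" by simp
    hence "s * (z \<bullet> z) + z \<bullet> (M *v z) > 0" using psd[rule_format, of z] that
      by (smt (verit) mult_pos_pos)
    thus "z \<bullet> ((\<chi> i j. (if i = j then s else 0) + M$i$j :: real^'n^'n) *v z) > 0"
      unfolding eq by (simp add: inner_add_right)
  qed
  have g0: "g 0 = det M" unfolding g_def by (rule arg_cong[where f=det]) (simp add: vec_eq_iff)
  have g1: "g 1 > 0" unfolding g_def by (rule pd_det_pos[OF pd]) simp
  obtain s where s: "0 \<le> s" "s \<le> 1" "g s = 0"
    using IVT'[of g 0 0 1] cont g0 g1 neg by auto
  have "s \<noteq> 0" using s g0 neg by auto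
  hence "g s \<noteq> 0" unfolding g_def using pd_nonsing[OF pd] s by simp
  thus False using s by simp
qed

lemma roots_props:
  fixes A :: "real^'n::finite^'n"
  assumes sym: "transpose A = A"
  shows "finite {t. det (mat t - A) = 0}" "{t. det (mat t - A) = 0} \<noteq> {}"
    "\<And>t z. t \<ge> Max {t. det (mat t - A) = 0} \<Longrightarrow> z \<bullet> ((mat t - A) *v z) \<ge> 0"
proof -
  let ?S = "{t. det (mat t - A) = 0}"
  have ev: "t \<in> ?S \<longleftrightarrow> (\<exists>v. v \<noteq> 0 \<and> A *v v = t *\<^sub>R v)" for t
    using det_eq0[of "mat t - A"] by (auto simp: matt_mult)
  define e where "e t = (SOME v. v \<noteq> 0 \<and> A *v v = t *\<^sub>R v)" for t
  have e: "e t \<noteq> 0 \<and> A *v e t = t *\<^sub>R e t" if "t \<in> ?S" for t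
    using someI_ex[OF ev[THEN iffD1, OF that]] e_def by simp
  have orth: "e t \<bullet> e s = 0" if "t \<in> ?S" "s \<in> ?S" "t \<noteq> s" for t s
  proof -
    have "e t \<bullet> (A *v e s) = e s \<bullet> (A *v e t)" by (rule sym_inner[OF sym])
    hence "s * (e t \<bullet> e s) = t * (e t \<bullet> e s)" using e that by (simp add: inner_commute)
    thus ?thesis using that by simp
  qed
  have inj: "inj_on e ?S"
  proof (rule inj_onI)
    fix t s assume "t \<in> ?S" "s \<in> ?S" "e t = e s"
    thus "t = s" using orth[of t s] e[of t] by fastforce
  qed
  have "independent (e ` ?S)"
    by (rule pairwise_orthogonal_independent)
       (use orth e in \<open>auto simp: pairwise_def orthogonal_def\<close>)
  hence "finite (e ` ?S)" using independent_bound by blast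
  thus fin: "finite ?S" using finite_image_iff[OF inj] by simp
  obtain \<mu> v where mv: "v \<noteq> 0" "A *v v = \<mu> *\<^sub>R v" "\<forall>z. z \<bullet> (A *v z) \<le> \<mu> * (z \<bullet> z)"
    using rayleigh_max[OF sym] by blast
  have mu: "\<mu> \<in> ?S" using ev mv by blast
  thus "?S \<noteq> {}" by blast
  fix t and z :: "real^'n" assume "t \<ge> Max ?S"
  hence "t \<ge> \<mu>" using Max_ge[OF fin mu] by simp
  moreover have "z \<bullet> z \<ge> 0" by simp
  ultimately have "t * (z \<bullet> z) - \<mu> * (z \<bullet> z) \<ge> 0"
    by (simp add: mult_right_mono)
  thus "z \<bullet> ((mat t - A) *v z) \<ge> 0" using mv(3)[rule_format, of z]
    by (simp add: matt_mult inner_diff_right)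
qed

lemma row_eq: "row i A = A $ i" by (simp add: row_def vec_eq_iff)

lemma det_unit_rows_aux:
  fixes T :: "'n::finite set"
  shows "\<forall>L::real^'n^'n. (\<forall>i. i \<notin> T \<longrightarrow> L$i = axis i 1) \<longrightarrow>
     (\<forall>i\<in>T. \<forall>j\<in>T. L$i$j = (if i = j then 1 else 0)) \<longrightarrow> det L = 1"
proof -
  have "finite T" by simp
  thus ?thesis
proof (induction T rule: finite_induct)
  case empty
  show ?case
  proof (intro allI impI)
    fix L :: "real^'n^'n" assume "\<forall>i. i \<notin> {} \<longrightarrow> L$i = axis i 1"
    hence "L = mat 1" by (simp add: vec_eq_iff axis_def mat_def)
    thus "det L = 1" by simp
  qed
next
  case (insert i T)
  show ?case
  proof (intro allI impI)
    fix L :: "real^'n^'n"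
    assume out: "\<forall>k. k \<notin> insert i T \<longrightarrow> L$k = axis k 1"
      and blk: "\<forall>a\<in>insert i T. \<forall>b\<in>insert i T. L$a$b = (if a = b then 1 else 0)"
    define L' where "L' = (\<chi> k. if k = i then axis i 1 else L$k :: real^'n^'n)"
    have h1: "\<forall>k. k \<notin> T \<longrightarrow> L'$k = axis k 1"
    proof (intro allI impI)
      fix k assume "k \<notin> T"
      show "L'$k = axis k 1"
      proof (cases "k = i")
        case True thus ?thesis by (simp add: L'_def)
      next
        case False thus ?thesis using out \<open>k \<notin> T\<close> by (simp add: L'_def)
      qed
    qed
    have h2: "\<forall>a\<in>T. \<forall>b\<in>T. L'$a$b = (if a = b then 1 else 0)"
    proof (intro ballI)
      fix a b assume "a \<in> T" "b \<in> T"
      hence "a \<noteq> i" using insert.hyps by blast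
      thus "L'$a$b = (if a = b then 1 else 0)" using blk \<open>a \<in> T\<close> \<open>b \<in> T\<close>
        by (simp add: L'_def)
    qed
    have imp: "(\<forall>k. k \<notin> T \<longrightarrow> L'$k = axis k 1) \<longrightarrow> (\<forall>a\<in>T. \<forall>b\<in>T. L'$a$b = (if a = b then 1 else 0)) \<longrightarrow> det L' = 1"
      using insert.IH by (rule spec)
    have dL': "det L' = 1" using mp[OF mp[OF imp h1] h2] .
    define w where "w = (\<Sum>j\<in>-insert i T. L$i$j *s axis j (1::real))"
    have w_sp: "w \<in> vec.span {row j L' |j. j \<noteq> i}"
      unfolding w_def
    proof (rule vec.span_sum)
      fix j assume "j \<in> - insert i T"
      hence "row j L' = axis j 1" using out by (auto simp: L'_def row_eq)
      moreover have "j \<noteq> i" using \<open>j \<in> - insert i T\<close> by auto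
      ultimately have mem: "axis j 1 \<in> {row k L' |k. k \<noteq> i}"
        by (intro CollectI exI[of _ j]) simp
      have "axis j 1 \<in> vec.span {row j L' |j. j \<noteq> i}" by (rule vec.span_base[OF mem])
      thus "L$i$j *s axis j 1 \<in> vec.span {row j L' |j. j \<noteq> i}"
        by (rule vec.span_scale)
    qed
    have "L = (\<chi> k. if k = i then row i L' + w else row k L')"
    proof -
      have "L$i = axis i 1 + w"
      proof (subst vec_eq_iff, rule allI)
        fix m
        have s: "(\<Sum>j\<in>-insert i T. L$i$j * axis j (1::real) $ m) = (if m \<in> insert i T then 0 else L$i$m)"
        proof -
          have "(\<Sum>j\<in>-insert i T. L$i$j * axis j (1::real) $ m) = (\<Sum>j\<in>-insert i T. if j = m then L$i$j else 0)"
            by (rule sum.cong) (simp_all add: axis_def)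
          also have "\<dots> = (if m \<in> - insert i T then L$i$m else 0)" by (rule sum.delta) simp
          finally show ?thesis by simp
        qed
        have "w $ m = (\<Sum>j\<in>-insert i T. L$i$j * axis j (1::real) $ m)"
          unfolding w_def by (simp add: sum_component)
        hence wm: "w $ m = (if m \<in> insert i T then 0 else L$i$m)" using s by simp
        show "L$i$m = (axis i 1 + w)$m"
        proof (cases "m \<in> insert i T")
          case True
          have "L$i$m = (if i = m then 1 else 0)" using blk True by blast
          thus ?thesis using True wm by (simp add: axis_def)
        next
          case False
          hence "m \<noteq> i" by blast
          thus ?thesis using wm False by (simp add: axis_def)
        qed
      qed
      thus ?thesis by (auto simp: vec_eq_iff L'_def row_eq)
    qed
    hence "det L = det L'" using det_row_span[OF w_sp] by simp
    thus "det L = 1" using dL' by simp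
  qed
qed
qed

lemma det_unit_rows:
  fixes L :: "real^'n::finite^'n"
  assumes "\<forall>i. i \<notin> T \<longrightarrow> L$i = axis i 1" "\<forall>i\<in>T. \<forall>j\<in>T. L$i$j = (if i = j then 1 else 0)"
  shows "det L = 1"
  using det_unit_rows_aux[of T] assms by simp

lemma det_2block:
  fixes D :: "'n::finite \<Rightarrow> 'n \<Rightarrow> real"
  assumes xy: "x \<noteq> y"
  shows "det (\<chi> i j. if i \<in> {x,y} \<and> j \<in> {x,y} then D i j else if i = j then 1 else 0 :: real^'n^'n)
     = D x x * D y y - D x y * D y x"
proof -
  let ?P = "(\<chi> i j. if i \<in> {x,y} \<and> j \<in> {x,y} then D i j else if i = j then 1 else 0 :: real^'n^'n)"
  let ?g = "\<lambda>p. of_int (sign p) * (\<Prod>i\<in>UNIV. ?P $ i $ p i)"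
  let ?U = "{p. p permutes (UNIV::'n set)}"
  have tr: "Transposition.transpose x y permutes (UNIV::'n set)" by (rule permutes_swap_id) auto
  have zero: "?g p = 0" if p: "p \<in> ?U - {id, Transposition.transpose x y}" for p
  proof -
    have pp: "p permutes UNIV" using p by simp
    have "\<exists>i. ?P $ i $ p i = 0"
    proof (cases "\<exists>i. i \<notin> {x,y} \<and> p i \<noteq> i")
      case True
      then obtain i where "i \<notin> {x,y}" "p i \<noteq> i" by blast
      thus ?thesis by (intro exI[of _ i]) simp
    next
      case False
      hence fx: "\<And>i. i \<notin> {x,y} \<Longrightarrow> p i = i" by blast
      have inj: "inj p" using pp permutes_inj by blast
      have px: "p x \<in> {x,y}"
      proof (rule ccontr)
        assume "p x \<notin> {x,y}"
        hence "p (p x) = p x" using fx by blast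
        hence "p x = x" using inj by (simp add: inj_eq)
        thus False using \<open>p x \<notin> {x,y}\<close> by simp
      qed
      have py: "p y \<in> {x,y}"
      proof (rule ccontr)
        assume "p y \<notin> {x,y}"
        hence "p (p y) = p y" using fx by blast
        hence "p y = y" using inj by (simp add: inj_eq)
        thus False using \<open>p y \<notin> {x,y}\<close> by simp
      qed
      have pxy: "p x \<noteq> p y" using inj xy by (simp add: inj_eq)
      have "p = id \<or> p = Transposition.transpose x y"
      proof (cases "p x = x")
        case True
        hence "p y = y" using py pxy by auto
        hence "p = id" using True fx by (metis id_apply ext insert_iff singletonD)
        thus ?thesis by simp
      next
        case False
        hence "p x = y" "p y = x" using px py pxy by auto
        hence "p = Transposition.transpose x y" using fx by (intro ext) (metis Transposition.transpose_def insert_iff singletonD)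
        thus ?thesis by simp
      qed
      thus ?thesis using p by simp
    qed
    hence ex: "\<exists>a\<in>UNIV. ?P $ a $ p a = 0" by blast
    have "(\<Prod>i\<in>UNIV. ?P $ i $ p i) = 0" by (rule prod_zero[OF _ ex]) simp
    thus ?thesis by simp
  qed
  have "det ?P = sum ?g ?U" unfolding det_def by simp
  also have "\<dots> = sum ?g {id, Transposition.transpose x y}"
    by (rule sum.mono_neutral_right) (use zero tr permutes_id in auto)
  also have "\<dots> = ?g id + ?g (Transposition.transpose x y)"
  proof -
    have "id \<noteq> Transposition.transpose x y" using xy by (auto simp: fun_eq_iff Transposition.transpose_def)
    hence "sum ?g {id, Transposition.transpose x y} = ?g id + sum ?g {Transposition.transpose x y}"
      by (intro sum.insert) auto
    moreover have "sum ?g {Transposition.transpose x y} = ?g (Transposition.transpose x y)"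
      by (simp only: sum.insert[OF finite.emptyI] empty_iff not_False_eq_True sum.empty add_0_right)
    ultimately show ?thesis by (simp only:)
  qed
  also have "(\<Prod>i\<in>UNIV. ?P $ i $ id i) = (\<Prod>i\<in>{x,y}. ?P $ i $ id i)"
    by (rule prod.mono_neutral_right) auto
  also have "(\<Prod>i\<in>UNIV. ?P $ i $ Transposition.transpose x y i) = (\<Prod>i\<in>{x,y}. ?P $ i $ Transposition.transpose x y i)"
    by (rule prod.mono_neutral_right) auto
  finally show ?thesis using xy by (simp add: sign_id sign_swap_id)
qed

definition colR :: "real^'n::finite^'n \<Rightarrow> 'n \<Rightarrow> 'n \<Rightarrow> 'n \<Rightarrow> real^'n" where
  "colR M x y u = (\<chi> r. if r \<notin> {x,y} then M$r$u else 0)"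

definition padR :: "real^'n::finite^'n \<Rightarrow> 'n \<Rightarrow> 'n \<Rightarrow> real^'n^'n" where
  "padR M x y = (\<chi> i j. if i \<notin> {x,y} \<and> j \<notin> {x,y} then M$i$j else if i = j then 1 else 0)"

definition schurd :: "real^'n::finite^'n \<Rightarrow> real^'n^'n \<Rightarrow> 'n \<Rightarrow> 'n \<Rightarrow> 'n \<Rightarrow> 'n \<Rightarrow> real" where
  "schurd M K x y u v = M$u$v - (K *v colR M x y u) \<bullet> colR M x y v"

lemma padR_S: "s \<in> {x,y} \<Longrightarrow> (padR M x y *v w) $ s = w $ s"
proof -
  assume s: "s \<in> {x,y}"
  have "(padR M x y *v w) $ s = (\<Sum>j\<in>UNIV. (if j = s then w $ j else 0))"
    unfolding matrix_vector_mult_def padR_def vec_lambda_beta using s by (intro sum.cong) auto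
  thus ?thesis by simp
qed

lemma padR_inv_supp:
  assumes ZK: "padR M x y ** K = mat 1" and s: "s \<in> {x,y}"
  shows "(K *v colR M x y u) $ s = 0"
proof -
  have "padR M x y *v (K *v colR M x y u) = colR M x y u"
    by (simp add: matrix_vector_mul_assoc ZK)
  hence "(padR M x y *v (K *v colR M x y u)) $ s = 0" using s by (auto simp: colR_def)
  thus ?thesis using padR_S[OF s] by simp
qed

lemma schur_det:
  fixes M K :: "real^'n::finite^'n"
  assumes xy: "x \<noteq> y"
    and symM: "\<And>i j. M$i$j = M$j$i"
    and ZK: "padR M x y ** K = mat 1"
  shows "det M = (schurd M K x y x x * schurd M K x y y y - schurd M K x y x y * schurd M K x y y x)
                 * det (padR M x y)"
proof -
  let ?Z = "padR M x y"
  define k where "k u = K *v colR M x y u" for u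
  define dd where "dd u v = schurd M K x y u v" for u v
  have Zk: "?Z *v k u = colR M x y u" for u
    by (simp add: k_def matrix_vector_mul_assoc ZK)
  have ks: "k u $ s = 0" if "s \<in> {x,y}" for u s
    using padR_inv_supp[OF ZK that] k_def by simp
  define L where "L = ((\<chi> i. if i = x then axis x 1 - k x else if i = y then axis y 1 - k y else axis i 1) :: real^'n^'n)"
  define N where "N = ((\<chi> i. if i = x then axis x 1 else if i = y then axis y 1 else M $ i) :: real^'n^'n)"
  define P where "P = (\<chi> i j. if i \<in> {x,y} \<and> j \<in> {x,y} then dd i j else if i = j then 1 else 0 :: real^'n^'n)"
  define G where "G = ((\<chi> i. if i \<in> {x,y} then axis i 1 else axis i 1 + M$i$x *s axis x 1 + M$i$y *s axis y 1) :: real^'n^'n)"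
  have detL: "det L = 1"
  proof (rule det_unit_rows[of "{x,y}"])
    show "\<forall>i. i \<notin> {x, y} \<longrightarrow> L $ i = axis i 1" by (simp add: L_def)
    show "\<forall>i\<in>{x, y}. \<forall>j\<in>{x, y}. L $ i $ j = (if i = j then 1 else 0)"
      using ks xy by (auto simp: L_def axis_def)
  qed
  have detG: "det G = 1"
  proof (rule det_unit_rows[of "- {x,y}"])
    show "\<forall>i. i \<notin> - {x, y} \<longrightarrow> G $ i = axis i 1" by (simp add: G_def)
    show "\<forall>i\<in>- {x, y}. \<forall>j\<in>- {x, y}. G $ i $ j = (if i = j then 1 else 0)"
      by (auto simp: G_def axis_def)
  qed
  have detP: "det P = dd x x * dd y y - dd x y * dd y x"
    unfolding P_def by (rule det_2block[OF xy])
  have rowu: "M$u$j - (\<Sum>l\<in>UNIV. k u $ l * M$l$j) = (if j \<in> {x,y} then dd u j else 0)" for u j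
  proof (cases "j \<in> {x,y}")
    case True
    have "(\<Sum>l\<in>UNIV. k u $ l * M$l$j) = k u \<bullet> colR M x y j"
      unfolding inner_vec_def colR_def
      by (intro sum.cong) (auto simp: ks)
    thus ?thesis using True by (simp add: dd_def schurd_def k_def)
  next
    case False
    have "(\<Sum>l\<in>UNIV. k u $ l * M$l$j) = (?Z *v k u) $ j"
      unfolding matrix_vector_mult_def padR_def vec_lambda_beta using False
      by (auto intro!: sum.cong simp: ks symM)
    also have "\<dots> = M$u$j" using False by (simp add: Zk colR_def symM)
    finally show ?thesis using False by simp
  qed
  have LM: "L ** M = P ** N"
  proof -
    have "(L ** M) $ i $ j = (P ** N) $ i $ j" for i j
    proof (cases "i \<in> {x,y}")
      case False
      have "(L ** M) $ i $ j = (\<Sum>l\<in>UNIV. if l = i then M $ l $ j else 0)"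
        unfolding matrix_matrix_mult_def L_def vec_lambda_beta using False
        by (intro sum.cong) (auto simp: axis_def)
      hence "(L ** M) $ i $ j = M $ i $ j" by simp
      moreover have "(P ** N) $ i $ j = M $ i $ j"
      proof -
        have "(P ** N) $ i $ j = (\<Sum>l\<in>UNIV. if l = i then N $ l $ j else 0)"
          unfolding matrix_matrix_mult_def P_def vec_lambda_beta using False by (intro sum.cong) auto
        thus ?thesis using False by (simp add: N_def)
      qed
      ultimately show ?thesis by simp
    next
      case True
      have "(L ** M) $ i $ j = M$i$j - (\<Sum>l\<in>UNIV. k i $ l * M$l$j)"
      proof -
        have "(L ** M) $ i $ j = (\<Sum>l\<in>UNIV. (axis i 1 - k i) $ l * M$l$j)"
          unfolding matrix_matrix_mult_def L_def vec_lambda_beta using True by auto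
        also have "\<dots> = (\<Sum>l\<in>UNIV. (if l = i then M$l$j else 0) - k i $ l * M$l$j)"
          by (intro sum.cong) (auto simp: axis_def algebra_simps)
        finally show ?thesis by (simp add: sum_subtractf)
      qed
      also have "\<dots> = (if j \<in> {x,y} then dd i j else 0)" by (rule rowu)
      also have "\<dots> = (P ** N) $ i $ j"
      proof -
        have "(P ** N) $ i $ j = (\<Sum>l\<in>UNIV. if l \<in> {x,y} then dd i l * N$l$j else 0)"
          unfolding matrix_matrix_mult_def P_def vec_lambda_beta using True by (intro sum.cong) auto
        also have "\<dots> = (\<Sum>l\<in>{x,y}. dd i l * N$l$j)"
          using sum.inter_restrict[of UNIV "\<lambda>l. dd i l * N$l$j" "{x,y}"] by simp
        also have "\<dots> = dd i x * N$x$j + dd i y * N$y$j" using xy by simp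
        finally show ?thesis using xy by (auto simp: N_def axis_def)
      qed
      finally show ?thesis .
    qed
    thus ?thesis by (simp add: vec_eq_iff)
  qed
  have NG: "N = G ** ?Z"
  proof -
    have "N $ i $ j = (G ** ?Z) $ i $ j" for i j
    proof (cases "i \<in> {x,y}")
      case True
      have "(G ** ?Z) $ i $ j = (\<Sum>l\<in>UNIV. if l = i then ?Z $ l $ j else 0)"
        unfolding matrix_matrix_mult_def G_def vec_lambda_beta using True by (intro sum.cong) (auto simp: axis_def)
      thus ?thesis using True xy by (auto simp: N_def padR_def axis_def)
    next
      case False
      have "(G ** ?Z) $ i $ j = (\<Sum>l\<in>UNIV. ((if l = i then 1 else 0) + M$i$x * (if l = x then 1 else 0)
               + M$i$y * (if l = y then 1 else 0)) * ?Z $ l $ j)"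
        unfolding matrix_matrix_mult_def G_def vec_lambda_beta using False by (intro sum.cong) (auto simp: axis_def)
      also have "\<dots> = (\<Sum>l\<in>UNIV. (if l = i then ?Z$l$j else 0) + (M$i$x * (if l = x then ?Z$l$j else 0)
               + M$i$y * (if l = y then ?Z$l$j else 0)))"
        by (intro sum.cong) (auto simp: algebra_simps)
      also have "\<dots> = ?Z $ i $ j + M$i$x * ?Z $ x $ j + M$i$y * ?Z $ y $ j"
        by (simp only: sum.distrib sum_distrib_left[symmetric]) simp
      also have "\<dots> = N $ i $ j"
        using False xy by (auto simp: N_def padR_def)
      finally show ?thesis by simp
    qed
    thus ?thesis by (simp add: vec_eq_iff)
  qed
  have "det L * det M = det P * (det G * det ?Z)"
    using LM NG by (metis det_mul)
  thus ?thesis using detL detG detP dd_def by simp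
qed

lemma psd_zero:
  fixes M :: "real^'n::finite^'n"
  assumes symM: "transpose M = M" and psd: "\<forall>z. z \<bullet> (M *v z) \<ge> 0" and v0: "v \<bullet> (M *v v) = 0"
  shows "M *v v = 0"
proof -
  define w where "w = M *v v"
  define q where "q = w \<bullet> w"
  define c where "c = w \<bullet> (M *v w)"
  have c0: "c \<ge> 0" using psd c_def by simp
  have ex: "(v + s *\<^sub>R w) \<bullet> (M *v (v + s *\<^sub>R w)) = 2 * s * q + s^2 * c" for s
  proof -
    have "v \<bullet> (M *v w) = w \<bullet> (M *v v)" by (rule sym_inner[OF symM])
    hence "v \<bullet> (M *v w) = q" by (simp add: q_def w_def)
    thus ?thesis using v0
      by (simp add: matrix_vector_right_distrib matrix_vector_mult_scaleR inner_add_left inner_add_right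
          q_def c_def w_def power2_eq_square algebra_simps)
  qed
  define s where "s = - q / (c + 1)"
  have "2 * s * q + s^2 * c \<ge> 0" using psd ex by metis
  hence "(c+1)^2 * (2 * s * q + s^2 * c) \<ge> 0" by simp
  moreover have "(c+1)^2 * (2 * s * q + s^2 * c) = -(q^2 * (c + 2))"
  proof -
    have hs: "s * (c+1) = -q" using c0 unfolding s_def by (simp add: field_simps)
    have "(c+1)^2 * (2 * s * q + s^2 * c) = 2*q*(c+1)*(s*(c+1)) + (s*(c+1))^2*c"
      by (simp add: algebra_simps power2_eq_square)
    also have "\<dots> = -(q^2 * (c + 2))" unfolding hs by (simp add: algebra_simps power2_eq_square)
    finally show ?thesis .
  qed
  ultimately have "q^2 * (c + 2) \<le> 0" by simp
  moreover have "c + 2 > 0" using c0 by simp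
  ultimately have "q^2 \<le> 0" by (simp add: mult_le_0_iff)
  hence "q = 0" by simp
  thus ?thesis unfolding q_def w_def by simp
qed

lemma mmatrix_nonneg:
  fixes Z :: "real^'n::finite^'n"
  assumes pd: "\<forall>z. z \<noteq> 0 \<longrightarrow> z \<bullet> (Z *v z) > 0"
    and offd: "\<forall>i j. i \<noteq> j \<longrightarrow> Z$i$j \<le> 0"
    and cnn: "\<forall>i. c$i \<ge> 0" and eq: "Z *v z = c"
  shows "z$i \<ge> 0"
proof -
  define zp where "zp = (\<chi> i. max 0 (z$i))"
  define zn where "zn = (\<chi> i. max 0 (- z$i))"
  have zsplit: "z = zp - zn" by (simp add: vec_eq_iff zp_def zn_def max_def)
  have t1: "zn \<bullet> (Z *v zp) \<le> 0"
  proof -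
    have "zn \<bullet> (Z *v zp) = (\<Sum>i\<in>UNIV. \<Sum>j\<in>UNIV. zn$i * Z$i$j * zp$j)"
      by (simp add: inner_vec_def matrix_vector_mult_def sum_distrib_left mult.assoc)
    also have "\<dots> \<le> 0"
    proof (intro sum_nonpos)
      fix i j
      show "zn$i * Z$i$j * zp$j \<le> 0"
      proof (cases "i = j")
        case True thus ?thesis by (simp add: zn_def zp_def max_def)
      next
        case False
        hence "Z$i$j \<le> 0" using offd by blast
        moreover have "zn$i \<ge> 0" "zp$j \<ge> 0" by (simp_all add: zn_def zp_def)
        ultimately show ?thesis by (simp add: mult_nonneg_nonpos mult_nonpos_nonneg mult_le_0_iff)
      qed
    qed
    finally show ?thesis .
  qed
  have t2: "zn \<bullet> c \<ge> 0"
    unfolding inner_vec_def by (intro sum_nonneg) (simp add: zn_def cnn)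
  have "zn \<bullet> c = zn \<bullet> (Z *v zp) - zn \<bullet> (Z *v zn)"
    using eq zsplit by (metis inner_diff_right matrix_vector_mult_diff_distrib)
  hence "zn \<bullet> (Z *v zn) \<le> 0" using t1 t2 by simp
  hence "zn = 0" using pd by (meson not_le)
  hence "zn$i = 0" by simp
  thus ?thesis by (simp add: zn_def max_def split: if_splits)
qed

lemma schur_quad:
  fixes M K :: "real^'n::finite^'n"
  assumes xy: "x \<noteq> y"
    and symM: "\<And>i j. M$i$j = M$j$i"
    and ZK: "padR M x y ** K = mat 1"
  defines "c \<equiv> colR M x y x + colR M x y y"
  shows "(axis x 1 + axis y 1 - K *v c) \<bullet> (M *v (axis x 1 + axis y 1 - K *v c))
        = M$x$x + M$y$y + 2 * M$x$y - c \<bullet> (K *v c)"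
proof -
  let ?Z = "padR M x y"
  define k where "k = K *v c"
  define u where "u = axis x 1 + axis y (1::real)"
  have tM: "transpose M = M" using symM by (simp add: vec_eq_iff transpose_def)
  have Zk: "?Z *v k = c" by (simp add: k_def matrix_vector_mul_assoc ZK)
  have ks: "k $ s = 0" if "s \<in> {x,y}" for s
  proof -
    have "(?Z *v k) $ s = k $ s" by (rule padR_S[OF that])
    thus ?thesis using Zk that by (auto simp: c_def colR_def)
  qed
  have Mu: "M *v u = column x M + column y M"
    by (simp add: u_def matrix_vector_right_distrib matrix_vector_mult_basis)
  have uMu: "u \<bullet> (M *v u) = M$x$x + M$y$y + 2 * M$x$y"
  proof -
    have "u \<bullet> w = w$x + w$y" for w by (simp add: u_def inner_add_left inner_axis')
    hence "u \<bullet> (M *v u) = (M *v u)$x + (M *v u)$y" by blast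
    thus ?thesis using symM[of x y] by (simp add: Mu column_def)
  qed
  have kMu: "k \<bullet> (M *v u) = k \<bullet> c"
    unfolding Mu inner_vec_def c_def colR_def column_def
    by (intro sum.cong) (auto simp: ks algebra_simps)
  have uMk: "u \<bullet> (M *v k) = k \<bullet> c" using sym_inner[OF tM, of u k] kMu by simp
  have kMk: "k \<bullet> (M *v k) = k \<bullet> c"
  proof -
    have "k \<bullet> (M *v k) = k \<bullet> (?Z *v k)"
      unfolding inner_vec_def
    proof (intro sum.cong refl)
      fix i
      show "inner (k$i) ((M *v k)$i) = inner (k$i) ((?Z *v k)$i)"
      proof (cases "i \<in> {x,y}")
        case True thus ?thesis using ks by simp
      next
        case False
        have "(M *v k)$i = (?Z *v k)$i"
          unfolding matrix_vector_mult_def padR_def vec_lambda_beta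
          using False by (intro sum.cong) (auto simp: ks)
        thus ?thesis by simp
      qed
    qed
    thus ?thesis using Zk by simp
  qed
  have "(u - k) \<bullet> (M *v (u - k)) = u \<bullet> (M *v u) - u \<bullet> (M *v k) - k \<bullet> (M *v u) + k \<bullet> (M *v k)"
    by (simp add: matrix_vector_mult_diff_distrib inner_diff_left inner_diff_right)
  also have "\<dots> = M$x$x + M$y$y + 2 * M$x$y - k \<bullet> c" using uMu uMk kMu kMk by simp
  finally show ?thesis by (simp add: u_def k_def inner_commute)
qed

lemma adj_entry: "adj_matrix F $ i $ j = (if F i j then 1 else 0)"
  by (simp add: adj_matrix_def)

lemma matt_entry: "(mat t - adj_matrix F) $ i $ j = (if i = j then t else 0) - (if F i j then 1 else 0)"
  by (simp add: adj_matrix_def mat_def)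

lemma quad_adj: "z \<bullet> ((mat t - adj_matrix F) *v z) = t * (z \<bullet> z) - (\<Sum>i\<in>UNIV. \<Sum>j\<in>UNIV. (if F i j then 1 else 0) * (z$i * z$j))"
proof -
  have "z \<bullet> (adj_matrix F *v z) = (\<Sum>i\<in>UNIV. \<Sum>j\<in>UNIV. (if F i j then 1 else 0) * (z$i * z$j))"
    unfolding inner_vec_def matrix_vector_mult_def adj_matrix_def vec_lambda_beta
    by (simp add: sum_distrib_left algebra_simps)
  thus ?thesis by (simp add: matt_mult inner_diff_right)
qed

lemma strict_pos:
  fixes F :: "'n::finite \<Rightarrow> 'n \<Rightarrow> bool" and w :: "real^'n"
  assumes symF: "\<forall>u v. F u v \<longrightarrow> F v u"
    and psd: "\<forall>z. z \<bullet> ((mat t - adj_matrix F) *v z) \<ge> 0"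
    and reach: "\<forall>S. x \<in> S \<and> y \<in> S \<and> (\<forall>u v. u \<in> S \<and> F u v \<longrightarrow> v \<in> S) \<longrightarrow> S = UNIV"
    and w0: "w \<noteq> 0" and wx: "w$x = 0" and wy: "w$y = 0"
  shows "w \<bullet> ((mat t - adj_matrix F) *v w) > 0"
proof (rule ccontr)
  let ?M = "mat t - adj_matrix F"
  assume "\<not> ?thesis"
  hence ww: "w \<bullet> (?M *v w) \<le> 0" by simp
  have symM: "transpose ?M = ?M"
    using symF by (auto simp: vec_eq_iff transpose_def adj_matrix_def mat_def)
  define a where "a = (\<chi> i. \<bar>w$i\<bar>)"
  have aa: "a \<bullet> a = w \<bullet> w"
    unfolding a_def inner_vec_def by (intro sum.cong) auto
  have "(\<Sum>i\<in>UNIV. \<Sum>j\<in>UNIV. (if F i j then 1 else 0) * (w$i * w$j))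
      \<le> (\<Sum>i\<in>UNIV. \<Sum>j\<in>UNIV. (if F i j then 1 else 0) * (a$i * a$j))"
    unfolding a_def
    by (intro sum_mono) (auto simp: abs_mult[symmetric])
  hence "a \<bullet> (?M *v a) \<le> w \<bullet> (?M *v w)"
    by (simp add: quad_adj aa)
  hence a0: "a \<bullet> (?M *v a) = 0" using ww psd by (meson antisym order.trans)
  have Ma: "?M *v a = 0" by (rule psd_zero[OF symM psd a0])
  have row: "t * a$i = (\<Sum>j\<in>UNIV. (if F i j then 1 else 0) * a$j)" for i
  proof -
    have "(?M *v a)$i = 0" using Ma by simp
    moreover have "(?M *v a)$i = t * a$i - (adj_matrix F *v a)$i"
      by (simp add: matt_mult)
    moreover have "(adj_matrix F *v a)$i = (\<Sum>j\<in>UNIV. (if F i j then 1 else 0) * a$j)"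
      by (simp add: matrix_vector_mult_def adj_matrix_def)
    ultimately show ?thesis by simp
  qed
  have anneg: "a$j \<ge> 0" for j by (simp add: a_def)
  define S where "S = {i. a$i = 0}"
  have "x \<in> S" "y \<in> S" using wx wy by (auto simp: S_def a_def)
  moreover have "\<forall>u v. u \<in> S \<and> F u v \<longrightarrow> v \<in> S"
  proof (intro allI impI)
    fix u v assume uv: "u \<in> S \<and> F u v"
    hence "(\<Sum>j\<in>UNIV. (if F u j then 1 else 0) * a$j) = 0" using row[of u] by (simp add: S_def)
    moreover have "\<forall>j\<in>UNIV. (if F u j then 1 else 0) * a$j \<ge> 0" using anneg by simp
    ultimately have "\<forall>j\<in>UNIV. (if F u j then 1 else (0::real)) * a$j = 0"
      using sum_nonneg_eq_0_iff[of UNIV "\<lambda>j. (if F u j then 1 else 0) * a$j"] by simp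
    hence "a$v = 0" using uv by force
    thus "v \<in> S" by (simp add: S_def)
  qed
  ultimately have "S = UNIV" using reach by blast
  hence "a = 0" by (simp add: S_def vec_eq_iff set_eq_iff)
  hence "w = 0" by (simp add: a_def vec_eq_iff)
  thus False using w0 by simp
qed

locale kop_setup =
  fixes E :: "'n::finite \<Rightarrow> 'n \<Rightarrow> bool" and K :: "'n set" and x y :: 'n and \<sigma> :: "'n \<Rightarrow> 'n"
  assumes sg: "simple_graph E" and conn: "connected_graph E" and xy: "x \<noteq> y"
    and xK: "x \<in> K" and yK: "y \<in> K"
    and aut: "graph_automorphism (Kop_core E K x y) \<sigma>"
    and sx: "\<sigma> x = y" and sy: "\<sigma> y = x"
    and fixXY: "\<forall>v \<in> Xset E K x y \<union> Xset E K y x. \<sigma> v = v"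
    and Xne: "Xset E K x y \<noteq> {}" and Yne: "Xset E K y x \<noteq> {}"
begin

abbreviation "X \<equiv> Xset E K x y"
abbreviation "Y \<equiv> Xset E K y x"
abbreviation "E' \<equiv> Kop E K x y"
abbreviation "E0 \<equiv> Kop_core E K x y"

lemma symE: "E u v \<Longrightarrow> E v u" using sg by (auto simp: simple_graph_def)
lemma irrE: "\<not> E v v" using sg by (auto simp: simple_graph_def)

lemma memX: "v \<in> X \<longleftrightarrow> E x v \<and> v \<notin> K \<and> \<not> E y v"
  by (auto simp: Xset_def nbh_def)
lemma memY: "v \<in> Y \<longleftrightarrow> E y v \<and> v \<notin> K \<and> \<not> E x v"
  by (auto simp: Xset_def nbh_def)
lemma X_R: "v \<in> X \<Longrightarrow> v \<noteq> x \<and> v \<noteq> y" using memX xK yK by auto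
lemma Y_R: "v \<in> Y \<Longrightarrow> v \<noteq> x \<and> v \<noteq> y" using memY xK yK by auto
lemma XY: "v \<in> X \<Longrightarrow> v \<notin> Y" using memX memY by auto

lemma E'_eq: "E' u v \<longleftrightarrow> (E u v \<and> \<not> ((u = x \<and> v \<in> X) \<or> (v = x \<and> u \<in> X))) \<or> (u = y \<and> v \<in> X) \<or> (v = y \<and> u \<in> X)"
  by (simp add: Kop_def)
lemma E0_eq: "E0 u v \<longleftrightarrow> E u v \<and> \<not> ((u = x \<and> v \<in> X) \<or> (v = x \<and> u \<in> X)) \<and> \<not> ((u = y \<and> v \<in> Y) \<or> (v = y \<and> u \<in> Y))"
  by (simp add: Kop_core_def)

lemma E'sym: "E' u v \<Longrightarrow> E' v u" using symE by (auto simp: E'_eq)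
lemma E'irr: "\<not> E' v v" using irrE X_R by (auto simp: E'_eq)

lemma RR: "i \<notin> {x,y} \<Longrightarrow> j \<notin> {x,y} \<Longrightarrow> (E' i j \<longleftrightarrow> E i j) \<and> (E0 i j \<longleftrightarrow> E i j)"
  by (auto simp: E'_eq E0_eq)

lemma Ex: "r \<notin> {x,y} \<Longrightarrow> E x r \<longleftrightarrow> E0 x r \<or> r \<in> X"
  using memX by (auto simp: E0_eq)
lemma Ey: "r \<notin> {x,y} \<Longrightarrow> E y r \<longleftrightarrow> E0 y r \<or> r \<in> Y"
  using memY xy by (auto simp: E0_eq)
lemma E'x: "r \<notin> {x,y} \<Longrightarrow> E' x r \<longleftrightarrow> E0 x r"
  using xy by (auto simp: E'_eq E0_eq)
lemma E'y: "r \<notin> {x,y} \<Longrightarrow> E' y r \<longleftrightarrow> E0 y r \<or> r \<in> X \<or> r \<in> Y"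
  using xy memY by (auto simp: E'_eq E0_eq)
lemma excl: "E0 x r \<Longrightarrow> r \<notin> X" "E0 y r \<Longrightarrow> r \<notin> Y" "E0 y r \<Longrightarrow> r \<notin> X" "E0 x r \<Longrightarrow> r \<notin> Y"
  using memX memY by (auto simp: E0_eq)
lemma E'xy: "E' x y \<longleftrightarrow> E x y"
  using X_R yK by (auto simp: E'_eq)

lemma bijs: "bij \<sigma>" using aut by (simp add: graph_automorphism_def)
lemma injs: "inj \<sigma>" using bijs bij_is_inj by blast
lemma E0s: "E0 (\<sigma> u) (\<sigma> v) \<longleftrightarrow> E0 u v" using aut by (simp add: graph_automorphism_def)
lemma sR: "\<sigma> i \<notin> {x,y} \<longleftrightarrow> i \<notin> {x,y}"
  using sx sy injs by (metis insert_iff singletonD inj_eq)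
lemma sX: "\<sigma> r \<in> X \<longleftrightarrow> r \<in> X"
  using fixXY injs by (metis UnI1 inj_eq)
lemma sY: "\<sigma> r \<in> Y \<longleftrightarrow> r \<in> Y"
  using fixXY injs by (metis UnI2 inj_eq)

lemma reach: "\<forall>S. x \<in> S \<and> y \<in> S \<and> (\<forall>u v. u \<in> S \<and> E' u v \<longrightarrow> v \<in> S) \<longrightarrow> S = UNIV"
proof (intro allI impI)
  fix S assume H: "x \<in> S \<and> y \<in> S \<and> (\<forall>u v. u \<in> S \<and> E' u v \<longrightarrow> v \<in> S)"
  have "v \<in> S" if "E\<^sup>*\<^sup>* x v" for v
    using that
  proof (induction rule: rtranclp_induct)
    case base thus ?case using H by simp
  next
    case (step w u)
    show ?case
    proof (cases "E' w u")
      case True thus ?thesis using H step by blast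
    next
      case False
      hence "(w = x \<and> u \<in> X) \<or> (u = x \<and> w \<in> X)" using step(2) by (auto simp: E'_eq)
      thus ?thesis
      proof
        assume "w = x \<and> u \<in> X"
        hence "E' y u" by (simp add: E'_eq)
        thus ?thesis using H by blast
      next
        assume "u = x \<and> w \<in> X" thus ?thesis using H by simp
      qed
    qed
  qed
  thus "S = UNIV" using conn by (auto simp: connected_graph_def)
qed

end

context kop_setup begin

lemma reidx: "(\<Sum>j\<in>UNIV. g (\<sigma> j)) = (\<Sum>j\<in>UNIV. (g j :: real))"
  using sum.reindex_bij_betw[of \<sigma> UNIV UNIV g] bijs by (simp add: bij_def bij_betw_def)

lemma main_ineq:
  assumes t: "t \<ge> index E'"
  shows "char_poly E t > char_poly E' t"
proof -
  define M where "M = mat t - adj_matrix E"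
  define M' where "M' = mat t - adj_matrix E'"
  have Ment: "M$i$j = (if i = j then t else 0) - (if E i j then 1 else 0)" for i j
    unfolding M_def by (rule matt_entry)
  have M'ent: "M'$i$j = (if i = j then t else 0) - (if E' i j then 1 else 0)" for i j
    unfolding M'_def by (rule matt_entry)
  have symM: "M$i$j = M$j$i" for i j using symE by (auto simp: Ment)
  have symM': "M'$i$j = M'$j$i" for i j using E'sym by (auto simp: M'ent)
  have symA': "transpose (adj_matrix E') = adj_matrix E'"
    using E'sym by (auto simp: vec_eq_iff transpose_def adj_matrix_def)
  have psd': "\<forall>z. z \<bullet> (M' *v z) \<ge> 0"
    using roots_props(3)[OF symA'] t by (simp add: M'_def index_def char_poly_def)
  define Z where "Z = padR M x y"
  have ZZ': "padR M' x y = Z"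
    unfolding Z_def padR_def using RR by (auto simp: vec_eq_iff Ment M'ent)
  have Zent: "Z$i$j = (if i \<notin> {x,y} \<and> j \<notin> {x,y} then M'$i$j else if i = j then 1 else 0)" for i j
    using ZZ'[symmetric] by (simp add: padR_def)
  have ZPD: "\<forall>z. z \<noteq> 0 \<longrightarrow> z \<bullet> (Z *v z) > 0"
  proof (intro allI impI)
    fix z :: "real^'n" assume z0: "z \<noteq> 0"
    define w where "w = (\<chi> i. if i \<in> {x,y} then 0 else z$i)"
    have Zz: "(Z *v z)$i = (if i \<in> {x,y} then z$i else (M' *v w)$i)" for i
    proof (cases "i \<in> {x,y}")
      case True
      have "(Z *v z)$i = (\<Sum>j\<in>UNIV. if j = i then z$j else 0)"
        unfolding matrix_vector_mult_def vec_lambda_beta using True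
        by (intro sum.cong) (auto simp: Zent)
      thus ?thesis using True by simp
    next
      case False
      have "(Z *v z)$i = (M' *v w)$i"
        unfolding matrix_vector_mult_def vec_lambda_beta using False
        by (intro sum.cong) (auto simp: Zent w_def)
      thus ?thesis using False by simp
    qed
    have split: "z \<bullet> (Z *v z) = w \<bullet> (M' *v w) + (\<Sum>i\<in>UNIV. if i \<in> {x,y} then (z$i)^2 else 0)"
    proof -
      have "z \<bullet> (Z *v z) = (\<Sum>i\<in>UNIV. (if i \<in> {x,y} then 0 else z$i * (M' *v w)$i) + (if i \<in> {x,y} then (z$i)^2 else 0))"
        unfolding inner_vec_def by (intro sum.cong) (auto simp: Zz power2_eq_square)
      also have "\<dots> = w \<bullet> (M' *v w) + (\<Sum>i\<in>UNIV. if i \<in> {x,y} then (z$i)^2 else 0)"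
      proof -
        have "w \<bullet> (M' *v w) = (\<Sum>i\<in>UNIV. if i \<in> {x,y} then 0 else z$i * (M' *v w)$i)"
          unfolding inner_vec_def by (intro sum.cong) (auto simp: w_def)
        thus ?thesis by (simp only: sum.distrib)
      qed
      finally show ?thesis .
    qed
    have sq: "(\<Sum>i\<in>UNIV. if i \<in> {x,y} then (z$i)^2 else 0) \<ge> 0" by (intro sum_nonneg) auto
    show "z \<bullet> (Z *v z) > 0"
    proof (cases "w = 0")
      case True
      obtain i where "z$i \<noteq> 0" using z0 by (auto simp: vec_eq_iff)
      hence iS: "i \<in> {x,y}" using True by (auto simp: w_def vec_eq_iff split: if_splits)
      have "(\<Sum>i\<in>UNIV. if i \<in> {x,y} then (z$i)^2 else 0) > 0"
      proof (rule sum_pos2[of UNIV i])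
        show "0 < (if i \<in> {x,y} then (z$i)^2 else 0)" using iS \<open>z$i \<noteq> 0\<close> by simp
      qed simp_all
      thus ?thesis using split True by simp
    next
      case False
      have "w \<bullet> (M' *v w) > 0"
        unfolding M'_def
        by (rule strict_pos[OF _ _ reach False]) (use E'sym psd' in \<open>auto simp: M'_def w_def\<close>)
      thus ?thesis using split sq by simp
    qed
  qed
  have detZ: "det Z > 0" by (rule pd_det_pos[OF ZPD])
  obtain Q where ZQ: "Z ** Q = mat 1" and QZ: "Q ** Z = mat 1"
    using detZ invertible_det_nz[of Z] unfolding invertible_def by auto
  have ZQv: "Z *v (Q *v c) = c" for c by (simp add: matrix_vector_mul_assoc ZQ)
  have QZv: "Q *v (Z *v c) = c" for c by (simp add: matrix_vector_mul_assoc QZ)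
  have symZ: "transpose Z = Z" using symM' by (auto simp: vec_eq_iff transpose_def Zent)
  define f where "f p q = (Q *v p) \<bullet> q" for p q
  have fsym: "f p q = f q p" for p q
  proof -
    have "f p q = (Q *v p) \<bullet> (Z *v (Q *v q))" by (simp add: f_def ZQv)
    also have "\<dots> = (Q *v q) \<bullet> (Z *v (Q *v p))" by (rule sym_inner[OF symZ])
    also have "\<dots> = f q p" by (simp add: f_def ZQv)
    finally show ?thesis .
  qed
  have fpos: "f p p > 0" if "p \<noteq> 0" for p
  proof -
    have "Q *v p \<noteq> 0" using ZQv[of p] that by auto
    hence "(Q *v p) \<bullet> (Z *v (Q *v p)) > 0" using ZPD by blast
    thus ?thesis by (simp add: f_def ZQv)
  qed
  have offd: "\<forall>i j. i \<noteq> j \<longrightarrow> Z$i$j \<le> 0" by (auto simp: Zent M'ent)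
  have Qnn: "(Q *v p)$i \<ge> 0" if "\<forall>i. p$i \<ge> 0" for p i
    by (rule mmatrix_nonneg[OF ZPD offd that ZQv])
  have fnn: "f p q \<ge> 0" if "\<forall>i. p$i \<ge> 0" "\<forall>i. q$i \<ge> 0" for p q
    unfolding f_def inner_vec_def using Qnn[OF that(1)] that(2)
    by (intro sum_nonneg) simp
  have fadd1: "f (p + q) r = f p r + f q r" for p q r
    by (simp add: f_def matrix_vector_right_distrib inner_add_left)
  have fadd2: "f p (q + r) = f p q + f p r" for p q r
    by (simp add: f_def inner_add_right)
  have Qneg: "Q *v (- p) = - (Q *v p)" for p
    using matrix_vector_mult_diff_distrib[of Q 0 p] by simp
  have fneg1: "f (- p) q = - f p q" for p q by (simp add: f_def Qneg)
  have fneg2: "f p (- q) = - f p q" for p q by (simp add: f_def)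
  have fdiff1: "f (p - q) r = f p r - f q r" for p q r
    using fadd1[of p "-q" r] fneg1[of q r] by simp
  have fdiff2: "f p (q - r) = f p q - f p r" for p q r
    using fadd2[of p q "-r"] fneg2[of p r] by simp
  define hx where "hx = ((\<chi> r. if r \<notin> {x,y} \<and> E0 x r then 1 else 0) :: real^'n)"
  define hy where "hy = ((\<chi> r. if r \<notin> {x,y} \<and> E0 y r then 1 else 0) :: real^'n)"
  define a where "a = ((\<chi> r. if r \<in> X then 1 else 0) :: real^'n)"
  define b where "b = ((\<chi> r. if r \<in> Y then 1 else 0) :: real^'n)"
  have colMx: "colR M x y x = -(hx + a)"
  proof (subst vec_eq_iff, intro allI)
    fix r
    show "colR M x y x $ r = (-(hx + a)) $ r"
    proof (cases "r \<in> {x,y}")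
      case True thus ?thesis using X_R by (auto simp: colR_def hx_def a_def)
    next
      case False
      have "E r x \<longleftrightarrow> E x r" using symE by blast
      hence "M$r$x = -(if E0 x r \<or> r \<in> X then 1 else 0)" using False Ex[OF False] by (auto simp: Ment)
      thus ?thesis using False excl(1)[of r] by (auto simp: colR_def hx_def a_def)
    qed
  qed
  have colMy: "colR M x y y = -(hy + b)"
  proof (subst vec_eq_iff, intro allI)
    fix r
    show "colR M x y y $ r = (-(hy + b)) $ r"
    proof (cases "r \<in> {x,y}")
      case True thus ?thesis using Y_R by (auto simp: colR_def hy_def b_def)
    next
      case False
      have "E r y \<longleftrightarrow> E y r" using symE by blast
      hence "M$r$y = -(if E0 y r \<or> r \<in> Y then 1 else 0)" using False Ey[OF False] by (auto simp: Ment)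
      thus ?thesis using False excl(2)[of r] by (auto simp: colR_def hy_def b_def)
    qed
  qed
  have colM'x: "colR M' x y x = -hx"
  proof (subst vec_eq_iff, intro allI)
    fix r
    show "colR M' x y x $ r = (-hx) $ r"
    proof (cases "r \<in> {x,y}")
      case True thus ?thesis by (auto simp: colR_def hx_def)
    next
      case False
      have "E' r x \<longleftrightarrow> E' x r" using E'sym by blast
      hence "M'$r$x = -(if E0 x r then 1 else 0)" using False E'x[OF False] by (auto simp: M'ent)
      thus ?thesis using False by (auto simp: colR_def hx_def)
    qed
  qed
  have colM'y: "colR M' x y y = -(hy + a + b)"
  proof (subst vec_eq_iff, intro allI)
    fix r
    show "colR M' x y y $ r = (-(hy + a + b)) $ r"
    proof (cases "r \<in> {x,y}")
      case True thus ?thesis using X_R Y_R by (auto simp: colR_def hy_def a_def b_def)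
    next
      case False
      have "E' r y \<longleftrightarrow> E' y r" using E'sym by blast
      hence "M'$r$y = -(if E0 y r \<or> r \<in> X \<or> r \<in> Y then 1 else 0)" using False E'y[OF False] by (auto simp: M'ent)
      thus ?thesis using False excl(2)[of r] excl(3)[of r] XY[of r] by (auto simp: colR_def hy_def a_def b_def)
    qed
  qed
  define pm where "pm p = ((\<chi> i. p $ \<sigma> i) :: real^'n)" for p
  have Zs: "Z $ \<sigma> i $ \<sigma> j = Z $ i $ j" for i j
  proof (cases "i \<notin> {x,y} \<and> j \<notin> {x,y}")
    case True
    hence "\<sigma> i \<notin> {x,y}" "\<sigma> j \<notin> {x,y}" using sR by auto
    hence "E' (\<sigma> i) (\<sigma> j) \<longleftrightarrow> E0 (\<sigma> i) (\<sigma> j)" using RR by blast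
    also have "\<dots> \<longleftrightarrow> E0 i j" by (rule E0s)
    also have "\<dots> \<longleftrightarrow> E' i j" using RR True by blast
    finally have "E' (\<sigma> i) (\<sigma> j) \<longleftrightarrow> E' i j" .
    moreover have "\<sigma> i = \<sigma> j \<longleftrightarrow> i = j" using injs by (simp add: inj_eq)
    ultimately show ?thesis using True sR by (simp add: Zent M'ent)
  next
    case False
    hence "\<not> (\<sigma> i \<notin> {x,y} \<and> \<sigma> j \<notin> {x,y})" using sR by blast
    moreover have "\<sigma> i = \<sigma> j \<longleftrightarrow> i = j" using injs by (simp add: inj_eq)
    ultimately show ?thesis using False by (simp only: Zent if_False)
  qed
  have Zpm: "Z *v pm p = pm (Z *v p)" for p
  proof -
    have "(Z *v pm p) $ i = (pm (Z *v p)) $ i" for i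
    proof -
      have "(pm (Z *v p)) $ i = (\<Sum>j\<in>UNIV. Z $ \<sigma> i $ j * p $ j)"
        by (simp add: pm_def matrix_vector_mult_def)
      also have "\<dots> = (\<Sum>j\<in>UNIV. Z $ \<sigma> i $ \<sigma> j * p $ \<sigma> j)"
        by (rule reidx[symmetric])
      also have "\<dots> = (Z *v pm p) $ i"
        by (simp add: pm_def matrix_vector_mult_def Zs)
      finally show ?thesis by simp
    qed
    thus ?thesis by (simp add: vec_eq_iff)
  qed
  have Qpm: "Q *v pm p = pm (Q *v p)" for p
  proof -
    have "Z *v pm (Q *v p) = pm p" by (simp add: Zpm ZQv)
    hence "Q *v (Z *v pm (Q *v p)) = Q *v pm p" by simp
    thus ?thesis using QZv by simp
  qed
  have fpm: "f (pm p) (pm q) = f p q" for p q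
  proof -
    have "f (pm p) (pm q) = pm (Q *v p) \<bullet> pm q" by (simp add: f_def Qpm)
    also have "\<dots> = (\<Sum>i\<in>UNIV. (Q *v p) $ \<sigma> i * q $ \<sigma> i)"
      by (simp add: inner_vec_def pm_def)
    also have "\<dots> = (\<Sum>i\<in>UNIV. (Q *v p) $ i * q $ i)" by (rule reidx)
    also have "\<dots> = f p q" by (simp add: f_def inner_vec_def)
    finally show ?thesis .
  qed
  have hxpm: "hx = pm hy"
    using sR E0s sx by (auto simp: vec_eq_iff hx_def hy_def pm_def)
  have apm: "pm a = a" using sX by (simp add: vec_eq_iff a_def pm_def)
  have bpm: "pm b = b" using sY by (simp add: vec_eq_iff b_def pm_def)
  define \<alpha> where "\<alpha> = f hx hx"
  define \<beta> where "\<beta> = f hx hy"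
  define \<gamma> where "\<gamma> = f hx a"
  define \<delta> where "\<delta> = f hx b"
  define aa where "aa = f a a"
  define bb where "bb = f b b"
  define ab where "ab = f a b"
  define e where "e = (if E x y then 1 else (0::real))"
  have fv: "f hx hx = \<alpha>" "f hy hy = \<alpha>" "f hx hy = \<beta>" "f hy hx = \<beta>"
    "f hx a = \<gamma>" "f a hx = \<gamma>" "f hy a = \<gamma>" "f a hy = \<gamma>"
    "f hx b = \<delta>" "f b hx = \<delta>" "f hy b = \<delta>" "f b hy = \<delta>"
    "f a a = aa" "f b b = bb" "f a b = ab" "f b a = ab"
    using fsym[of hy hx] fsym[of a hx] fsym[of a hy] fsym[of b hx] fsym[of b hy] fsym[of b a]
      fpm[of hy hy] fpm[of hy a] fpm[of hy b]
    by (simp_all add: \<alpha>_def \<beta>_def \<gamma>_def \<delta>_def aa_def bb_def ab_def hxpm apm bpm)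
  have nn_hx: "\<forall>i. hx$i \<ge> 0" by (simp add: hx_def)
  have nn_hy: "\<forall>i. hy$i \<ge> 0" by (simp add: hy_def)
  have nn_a: "\<forall>i. a$i \<ge> 0" by (simp add: a_def)
  have nn_b: "\<forall>i. b$i \<ge> 0" by (simp add: b_def)
  have g0: "\<gamma> \<ge> 0" unfolding \<gamma>_def by (rule fnn[OF nn_hx nn_a])
  have d0: "\<delta> \<ge> 0" unfolding \<delta>_def by (rule fnn[OF nn_hx nn_b])
  have ab0: "ab \<ge> 0" unfolding ab_def by (rule fnn[OF nn_a nn_b])
  have a0: "a \<noteq> 0"
  proof -
    obtain v where "v \<in> X" using Xne by blast
    hence "a $ v = 1" by (simp add: a_def)
    thus ?thesis by auto
  qed
  have b0: "b \<noteq> 0"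
  proof -
    obtain v where "v \<in> Y" using Yne by blast
    hence "b $ v = 1" by (simp add: b_def)
    thus ?thesis by auto
  qed
  have aa0: "aa > 0" unfolding aa_def by (rule fpos[OF a0])
  have bb0: "bb > 0" unfolding bb_def by (rule fpos[OF b0])
  have Mxx: "M$x$x = t" "M$y$y = t" using irrE by (simp_all add: Ment)
  have Mxy: "M$x$y = -e" "M$y$x = -e" using xy symE by (auto simp: Ment e_def)
  have M'xx: "M'$x$x = t" "M'$y$y = t" using E'irr by (simp_all add: M'ent)
  have M'xy: "M'$x$y = -e" "M'$y$x = -e" using xy E'sym E'xy by (auto simp: M'ent e_def)
  have schurf: "schurd N Q x y u v = N$u$v - f (colR N x y u) (colR N x y v)" for N u v
    by (simp add: schurd_def f_def)
  have ZQ1: "padR M x y ** Q = mat 1" using ZQ Z_def by simp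
  have ZQ2: "padR M' x y ** Q = mat 1" using ZQ ZZ' by simp
  have cE: "char_poly E t = ((t - (\<alpha> + 2*\<gamma> + aa)) * (t - (\<alpha> + 2*\<delta> + bb)) - (e + \<beta> + \<gamma> + \<delta> + ab)^2) * det Z"
  proof -
    have "char_poly E t = det M" by (simp add: char_poly_def M_def)
    also have "\<dots> = (schurd M Q x y x x * schurd M Q x y y y - schurd M Q x y x y * schurd M Q x y y x) * det Z"
      using schur_det[OF xy symM ZQ1] Z_def by simp
    also have "\<dots> = ((t - (\<alpha> + 2*\<gamma> + aa)) * (t - (\<alpha> + 2*\<delta> + bb)) - (e + \<beta> + \<gamma> + \<delta> + ab)^2) * det Z"
    proof -
      have "schurd M Q x y x x = t - (\<alpha> + 2*\<gamma> + aa)"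
        by (simp add: schurf colMx Mxx fadd1 fadd2 fneg1 fneg2 fdiff1 fdiff2 fv)
      moreover have "schurd M Q x y y y = t - (\<alpha> + 2*\<delta> + bb)"
        by (simp add: schurf colMy Mxx fadd1 fadd2 fneg1 fneg2 fdiff1 fdiff2 fv)
      moreover have "schurd M Q x y x y = -(e + \<beta> + \<gamma> + \<delta> + ab)"
        by (simp add: schurf colMx colMy Mxy fadd1 fadd2 fneg1 fneg2 fdiff1 fdiff2 fv)
      moreover have "schurd M Q x y y x = -(e + \<beta> + \<gamma> + \<delta> + ab)"
        by (simp add: schurf colMx colMy Mxy fadd1 fadd2 fneg1 fneg2 fdiff1 fdiff2 fv)
      ultimately show ?thesis by (simp only:) (simp add: power2_eq_square algebra_simps)
    qed
    finally show ?thesis .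
  qed
  have cE': "char_poly E' t = ((t - \<alpha>) * (t - (\<alpha> + aa + bb + 2*\<gamma> + 2*\<delta> + 2*ab)) - (e + \<beta> + \<gamma> + \<delta>)^2) * det Z"
  proof -
    have "char_poly E' t = det M'" by (simp add: char_poly_def M'_def)
    also have "\<dots> = (schurd M' Q x y x x * schurd M' Q x y y y - schurd M' Q x y x y * schurd M' Q x y y x) * det Z"
      using schur_det[OF xy symM' ZQ2] ZZ' by simp
    also have "\<dots> = ((t - \<alpha>) * (t - (\<alpha> + aa + bb + 2*\<gamma> + 2*\<delta> + 2*ab)) - (e + \<beta> + \<gamma> + \<delta>)^2) * det Z"
    proof -
      have "schurd M' Q x y x x = t - \<alpha>"
        by (simp add: schurf colM'x M'xx fadd1 fadd2 fneg1 fneg2 fdiff1 fdiff2 fv)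
      moreover have "schurd M' Q x y y y = t - (\<alpha> + aa + bb + 2*\<gamma> + 2*\<delta> + 2*ab)"
        by (simp add: schurf colM'y M'xx fadd1 fadd2 fneg1 fneg2 fdiff1 fdiff2 fv)
      moreover have "schurd M' Q x y x y = -(e + \<beta> + \<gamma> + \<delta>)"
        by (simp add: schurf colM'x colM'y M'xy fadd1 fadd2 fneg1 fneg2 fdiff1 fdiff2 fv)
      moreover have "schurd M' Q x y y x = -(e + \<beta> + \<gamma> + \<delta>)"
        by (simp add: schurf colM'x colM'y M'xy fadd1 fadd2 fneg1 fneg2 fdiff1 fdiff2 fv)
      ultimately show ?thesis by (simp only:) (simp add: power2_eq_square algebra_simps)
    qed
    finally show ?thesis .
  qed
  have quad: "2*t - 2*e - (2*\<alpha> + 2*\<beta> + 4*\<gamma> + 4*\<delta> + aa + bb + 2*ab) \<ge> 0"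
  proof -
    define c where "c = colR M' x y x + colR M' x y y"
    define v where "v = axis x 1 + axis y 1 - Q *v c"
    have "v \<bullet> (M' *v v) = M'$x$x + M'$y$y + 2 * M'$x$y - c \<bullet> (Q *v c)"
      unfolding v_def c_def by (rule schur_quad[OF xy symM' ZQ2])
    also have "c \<bullet> (Q *v c) = f c c" by (simp add: f_def inner_commute)
    also have "M'$x$x + M'$y$y + 2 * M'$x$y - f c c = 2*t - 2*e - (2*\<alpha> + 2*\<beta> + 4*\<gamma> + 4*\<delta> + aa + bb + 2*ab)"
      by (simp add: c_def colM'x colM'y M'xx M'xy fadd1 fadd2 fneg1 fneg2 fdiff1 fdiff2 fv)
    finally show ?thesis using psd' by metis
  qed
  define P where "P = 2*\<gamma> + aa"
  define R where "R = 2*\<delta> + bb"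
  define s where "s = t - \<alpha>"
  define w where "w = e + \<beta> + \<gamma> + \<delta>"
  have P0: "P > 0" using g0 aa0 by (simp add: P_def)
  have R0: "R > 0" using d0 bb0 by (simp add: R_def)
  have q2: "2 * s - 2 * w - ab \<ge> 0" using quad P0 R0 ab0 unfolding P_def R_def s_def w_def by (smt (verit))
  have diff: "((t - (\<alpha> + 2*\<gamma> + aa)) * (t - (\<alpha> + 2*\<delta> + bb)) - (e + \<beta> + \<gamma> + \<delta> + ab)^2)
      - ((t - \<alpha>) * (t - (\<alpha> + aa + bb + 2*\<gamma> + 2*\<delta> + 2*ab)) - (e + \<beta> + \<gamma> + \<delta>)^2)
      = P * R + ab * (2 * s - 2 * w - ab)"
    unfolding P_def R_def s_def w_def by (simp add: algebra_simps power2_eq_square)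
  have "P * R + ab * (2 * s - 2 * w - ab) > 0"
    using P0 R0 ab0 q2 by (simp add: add_pos_nonneg mult_nonneg_nonneg)
  hence "(P * R + ab * (2 * s - 2 * w - ab)) * det Z > 0" using detZ by simp
  moreover have "char_poly E t - char_poly E' t = (P * R + ab * (2 * s - 2 * w - ab)) * det Z"
    unfolding cE cE' diff[symmetric] by (rule left_diff_distrib[symmetric])
  ultimately show ?thesis by simp
qed

end

theorem mainTheorem16:
  fixes E :: "'n::finite \<Rightarrow> 'n \<Rightarrow> bool" and K :: "'n set" and x y :: 'n
  assumes "simple_graph E" and "connected_graph E"
    and "x \<noteq> y" and "x \<in> K" and "y \<in> K"
    and "symmetric_Kop E K x y"
    and "Xset E K x y \<noteq> {}" and "Xset E K y x \<noteq> {}"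
  shows "index E \<le> index (Kop E K x y)
    \<and> (\<forall>t::real. t \<ge> index (Kop E K x y) \<longrightarrow> char_poly E t > char_poly (Kop E K x y) t)"
proof -
  obtain \<sigma> where s: "graph_automorphism (Kop_core E K x y) \<sigma>" "\<sigma> x = y" "\<sigma> y = x"
    "\<forall>v \<in> Xset E K x y \<union> Xset E K y x. \<sigma> v = v"
    using assms(6) unfolding symmetric_Kop_def by blast
  interpret kop_setup E K x y \<sigma>
    using assms s by unfold_locales auto
  have ineq: "\<forall>t::real. t \<ge> index E' \<longrightarrow> char_poly E t > char_poly E' t"
    using main_ineq by blast
  have symA: "transpose (adj_matrix E) = adj_matrix E"
    using symE by (auto simp: vec_eq_iff transpose_def adj_matrix_def)
  have symA': "transpose (adj_matrix E') = adj_matrix E'"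
    using E'sym by (auto simp: vec_eq_iff transpose_def adj_matrix_def)
  let ?S = "{t. char_poly E t = 0}"
  have fin: "finite ?S" and ne: "?S \<noteq> {}"
    using roots_props(1,2)[OF symA] by (simp_all add: char_poly_def)
  have "r < index E'" if "r \<in> ?S" for r
  proof (rule ccontr)
    assume "\<not> r < index E'"
    hence r: "r \<ge> index E'" by simp
    have "\<forall>z. z \<bullet> ((mat r - adj_matrix E') *v z) \<ge> 0"
      using roots_props(3)[OF symA'] r by (simp add: index_def char_poly_def)
    hence "char_poly E' r \<ge> 0" unfolding char_poly_def by (rule psd_det_nonneg)
    moreover have "char_poly E r > char_poly E' r" using ineq r by blast
    ultimately show False using that by simp
  qed
  hence "index E \<le> index E'" unfolding index_def using fin ne
    by (simp add: Max_le_iff less_imp_le)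
  thus ?thesis using ineq by blast
qed


end
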